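(* Let $n\in\mathbb N$ and let $T:\mathbb C_n[z]\to\mathbb C[z]$ be a linear operator. Then $T$ preserves stability (i.e. $T(f)\in\mathcal H_1(\mathbb C)\cup\{0\}$ for every $f\in\mathcal H_1(\mathbb C)\cap\mathbb C_n[z]$) if and only if either (a) $T$ has range of dimension at most one and $T(f)=\alpha(f)P$ for $f\in\mathbb C_n[z]$, where $\alpha:\mathbb C_n[z]\to\mathbb C$ is a linear functional and $P\in\mathcal H_1(\mathbb C)$; or (b) $T[(z+w)^n]\in\mathcal H_2(\mathbb C)$.
   Context: $\mathbb C_n[z]$ is the space of complex polynomials of degree at most $n$. A polynomial $f\in\mathbb C[z_1,\dots,z_k]$ is stable if it is non-zero and $f(z_1,\dots,z_k)\neq0$ whenever $\Im z_j>0$ for all $j$; $\mathcal H_k(\mathbb C)$ denotes the set of stable polynomials in $k$ variables. $T$ is extended to polynomials in $z,w$ by $T(z^kw^\ell)=T(z^k)w^\ell$. *)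

theory Defs
  imports Complex_Main "HOL-Computational_Algebra.Polynomial"
begin

definition stable1 :: "complex poly \<Rightarrow> bool" where
  "stable1 p \<longleftrightarrow> p \<noteq> 0 \<and> (\<forall>z. Im z > 0 \<longrightarrow> poly p z \<noteq> 0)"

text \<open>Bivariate polynomials in z,w are represented as elements of C[z][w]:
  a polynomial in w whose coefficients are polynomials in z.\<close>
definition eval2 :: "complex poly poly \<Rightarrow> complex \<Rightarrow> complex \<Rightarrow> complex" where
  "eval2 p z w = poly (map_poly (\<lambda>c. poly c z) p) w"

definition stable2 :: "complex poly poly \<Rightarrow> bool" where
  "stable2 p \<longleftrightarrow> p \<noteq> 0 \<and> (\<forall>z w. Im z > 0 \<longrightarrow> Im w > 0 \<longrightarrow> eval2 p z w \<noteq> 0)"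

text \<open>Linearity of an operator C_n[z] -> C[z] (only its values on degree <= n matter).\<close>
definition linear_op_Cn :: "nat \<Rightarrow> (complex poly \<Rightarrow> complex poly) \<Rightarrow> bool" where
  "linear_op_Cn n T \<longleftrightarrow> (\<forall>f g a b. degree f \<le> n \<longrightarrow> degree g \<le> n \<longrightarrow>
      T (smult a f + smult b g) = smult a (T f) + smult b (T g))"

definition linear_fun_Cn :: "nat \<Rightarrow> (complex poly \<Rightarrow> complex) \<Rightarrow> bool" where
  "linear_fun_Cn n \<alpha> \<longleftrightarrow> (\<forall>f g a b. degree f \<le> n \<longrightarrow> degree g \<le> n \<longrightarrow>
      \<alpha> (smult a f + smult b g) = a * \<alpha> f + b * \<alpha> g)"

definition preserves_stability :: "nat \<Rightarrow> (complex poly \<Rightarrow> complex poly) \<Rightarrow> bool" where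
  "preserves_stability n T \<longleftrightarrow>
     (\<forall>f. stable1 f \<and> degree f \<le> n \<longrightarrow> stable1 (T f) \<or> T f = 0)"

text \<open>T[(z+w)^n] = sum_k (n choose k) T(z^k) w^(n-k), as an element of C[z][w].\<close>
definition symbol :: "nat \<Rightarrow> (complex poly \<Rightarrow> complex poly) \<Rightarrow> complex poly poly" where
  "symbol n T = (\<Sum>k\<le>n. monom (smult (of_nat (n choose k)) (T (monom 1 k))) (n - k))"

end

theory Submission
  imports Defs "HOL-Complex_Analysis.Complex_Analysis" "HOL-Computational_Algebra.Fundamental_Theorem_Algebra"
begin

lemma lin_zero: assumes "linear_op_Cn n T" shows "T 0 = 0"
proof -
  have "T (smult 0 0 + smult 0 0) = smult 0 (T 0) + smult 0 (T 0)"
    using assms unfolding linear_op_Cn_def by (metis degree_0 le0)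
  then show ?thesis by simp
qed

lemma lin_add: assumes "linear_op_Cn n T" "degree f \<le> n" "degree g \<le> n"
  shows "T (f + g) = T f + T g"
  using assms unfolding linear_op_Cn_def by (metis smult_1_left)

lemma lin_smult: assumes "linear_op_Cn n T" "degree f \<le> n"
  shows "T (smult a f) = smult a (T f)"
proof -
  have "T (smult a f + smult 0 f) = smult a (T f) + smult 0 (T f)"
    using assms unfolding linear_op_Cn_def by blast
  then show ?thesis by simp
qed

lemma lin_sum: assumes "linear_op_Cn n T" "finite A" "\<And>k. k \<in> A \<Longrightarrow> degree (p k) \<le> n"
  shows "T (\<Sum>k\<in>A. p k) = (\<Sum>k\<in>A. T (p k))"
  using assms(2,3)
proof (induction A rule: finite_induct)
  case empty then show ?case using lin_zero[OF assms(1)] by simp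
next
  case (insert x F)
  have "degree (\<Sum>k\<in>F. p k) \<le> n" using insert by (intro degree_sum_le) auto
  then show ?case using insert lin_add[OF assms(1)] by simp
qed

lemma poly_as_monoms: "degree (f::complex poly) \<le> n \<Longrightarrow> f = (\<Sum>k\<le>n. smult (coeff f k) (monom 1 k))"
  by (rule poly_eqI) (auto simp: coeff_sum smult_monom coeff_monom coeff_eq_0 cong: if_cong)

lemma T_expand: assumes "linear_op_Cn n T" "degree f \<le> n"
  shows "T f = (\<Sum>k\<le>n. smult (coeff f k) (T (monom 1 k)))"
proof -
  have "T f = T (\<Sum>k\<le>n. smult (coeff f k) (monom 1 k))" using poly_as_monoms[OF assms(2)] by simp
  also have "\<dots> = (\<Sum>k\<le>n. T (smult (coeff f k) (monom 1 k)))"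
    by (rule lin_sum[OF assms(1)]) (auto simp: degree_monom_eq smult_monom degree_monom_le intro: order.trans[OF degree_monom_le])
  also have "\<dots> = (\<Sum>k\<le>n. smult (coeff f k) (T (monom 1 k)))"
    by (intro sum.cong refl lin_smult[OF assms(1)]) (simp add: degree_monom_eq)
  finally show ?thesis .
qed

lemma poly_T_expand: assumes "linear_op_Cn n T" "degree f \<le> n"
  shows "poly (T f) z = (\<Sum>k\<le>n. coeff f k * poly (T (monom 1 k)) z)"
  by (subst T_expand[OF assms]) (simp add: poly_sum)

definition gp :: "nat \<Rightarrow> (nat \<Rightarrow> 'a::comm_ring_1) \<Rightarrow> 'a poly" where
  "gp n c = (\<Sum>k\<le>n. monom (c k) (n - k))"

lemma coeff_gp: "coeff (gp n c) j = (if j \<le> n then c (n - j) else 0)"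
proof -
  have "coeff (gp n c) j = (\<Sum>k\<le>n. if n - k = j then c k else 0)"
    by (simp add: gp_def coeff_sum coeff_monom)
  also have "\<dots> = (\<Sum>k\<in>{..n} \<inter> {k. n - k = j}. c k)"
    by (simp add: sum.inter_restrict)
  also have "\<dots> = (if j \<le> n then c (n - j) else 0)"
  proof (cases "j \<le> n")
    case True
    then have "{..n} \<inter> {k. n - k = j} = {n - j}" by auto
    then show ?thesis using True by simp
  next
    case False
    then have "{..n} \<inter> {k. n - k = j} = {}" by auto
    then show ?thesis using False by simp
  qed
  finally show ?thesis .
qed

lemma poly_gp: "poly (gp n c) w = (\<Sum>k\<le>n. c k * w ^ (n - k))"
  by (simp add: gp_def poly_sum poly_monom)

lemma symbol_gp: "symbol n T = gp n (\<lambda>k. smult (of_nat (n choose k)) (T (monom 1 k)))"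
  by (simp add: symbol_def gp_def)

lemma eval2_symbol: "eval2 (symbol n T) z w = (\<Sum>k\<le>n. of_nat (n choose k) * poly (T (monom 1 k)) z * w ^ (n - k))"
proof -
  have "map_poly (\<lambda>c. poly c z) (symbol n T) = gp n (\<lambda>k. of_nat (n choose k) * poly (T (monom 1 k)) z)"
    by (rule poly_eqI) (simp add: coeff_map_poly symbol_gp coeff_gp)
  then show ?thesis unfolding eval2_def by (simp add: poly_gp)
qed



lemma pderiv_prod_mset_linear:
  fixes w :: complex
  assumes "\<forall>r\<in>#R. w \<noteq> r"
  shows "poly (pderiv (\<Prod>r\<in>#R. [:-r,1:])) w = poly (\<Prod>r\<in>#R. [:-r,1:]) w * (\<Sum>r\<in>#R. 1/(w - r))"
  using assms
proof (induction R)
  case empty then show ?case by simp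
next
  case (add a R)
  have wa: "w - a \<noteq> 0" using add.prems by simp
  have IH: "poly (pderiv (\<Prod>r\<in>#R. [:-r,1:])) w = poly (\<Prod>r\<in>#R. [:-r,1:]) w * (\<Sum>r\<in>#R. 1/(w - r))"
    using add by auto
  define P where "P = (\<Prod>r\<in>#R. [:-r,1:])"
  have d: "pderiv ([:-a,1:] * P) = [:-a,1:] * pderiv P + P * pderiv [:-a,1:]" by (rule pderiv_mult)
  have d1: "pderiv [:-a,1:] = (1::complex poly)" by (simp add: pderiv_pCons)
  have e: "poly (pderiv ([:-a,1:] * P)) w = (w - a) * poly (pderiv P) w + poly P w"
    unfolding d d1 by (simp add: algebra_simps)
  have "poly (pderiv ([:-a,1:] * P)) w = poly ([:-a,1:] * P) w * ((\<Sum>r\<in>#R. 1/(w - r)) + 1/(w-a))"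
    unfolding e using wa IH unfolding P_def[symmetric] by (simp add: field_simps)
  then show ?case unfolding P_def by (simp add: add.commute)
qed

lemma key_ineq_step:
  fixes a b p q c m :: real
  assumes "c > 0" "m \<ge> 0" "c * (a^2 + b^2) + m * b \<le> 0" "c * (p^2 + q^2) + q \<le> 0"
  shows "c * ((a+p)^2 + (b+q)^2) + (m+1) * (b + q) \<le> 0"
proof (cases "m = 0")
  case True
  then have "c * (a^2 + b^2) \<le> 0" using assms by simp
  then have "a^2 + b^2 \<le> 0" using assms(1) by (simp add: mult_le_0_iff)
  then have "a = 0" "b = 0" by (auto simp: add_nonneg_eq_0_iff sum_power2_le_zero_iff)
  then show ?thesis using assms True by simp
next
  case False
  then have mpos: "m > 0" using assms by simp
  have id: "m * (c * ((a+p)^2 + (b+q)^2) + (m+1) * (b + q)) =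
     (m+1) * (c * (a^2 + b^2) + m * b) + m * (m+1) * (c * (p^2 + q^2) + q) - c * ((a - m*p)^2 + (b - m*q)^2)"
    by (simp add: algebra_simps power2_eq_square)
  have "(m+1) * (c * (a^2 + b^2) + m * b) \<le> 0" using assms mpos by (simp add: mult_nonneg_nonpos)
  moreover have "m * (m+1) * (c * (p^2 + q^2) + q) \<le> 0" using assms mpos by (simp add: mult_nonneg_nonpos)
  moreover have "c * ((a - m*p)^2 + (b - m*q)^2) \<ge> 0" using assms by simp
  ultimately have "m * (c * ((a+p)^2 + (b+q)^2) + (m+1) * (b + q)) \<le> 0" unfolding id by linarith
  then show ?thesis using mpos by (simp add: mult_le_0_iff)
qed

lemma single_ineq:
  fixes w r :: complex
  assumes "Im w > 0" "Im r \<le> 0"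
  shows "Im w * ((Re (1/(w-r)))^2 + (Im (1/(w-r)))^2) + Im (1/(w-r)) \<le> 0"
proof -
  define y where "y = w - r"
  have yi: "Im y \<ge> Im w" using assms unfolding y_def by simp
  have ny: "(Re y)^2 + (Im y)^2 > 0" using yi assms
    by (metis add_pos_nonneg order_less_le_trans zero_less_power2 zero_le_power2 add.commute)
  define D where "D = (Re y)^2 + (Im y)^2"
  have r1: "Re (1/y) = Re y / D" "Im (1/y) = - Im y / D"
    unfolding D_def by (simp_all add: Re_divide Im_divide power2_eq_square)
  have Dp: "D > 0" using ny unfolding D_def .
  have "(Re y / D)^2 + (- Im y / D)^2 = ((Re y)^2 + (Im y)^2) / D^2"
    by (simp add: power_divide add_divide_distrib)
  also have "\<dots> = 1 / D" using Dp unfolding D_def[symmetric] by (simp add: power2_eq_square)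
  finally have r2: "(Re y / D)^2 + (- Im y / D)^2 = 1 / D" .
  have "Im w * ((Re (1/y))^2 + (Im (1/y))^2) + Im (1/y) = Im w / D - Im y / D"
    unfolding r1 r2 by simp
  also have "\<dots> = (Im w - Im y) / ((Re y)^2 + (Im y)^2)" unfolding D_def by (simp add: diff_divide_distrib)
  also have "\<dots> \<le> 0" using yi ny by (simp add: divide_nonpos_pos)
  finally show ?thesis unfolding y_def .
qed

lemma sum_ineq:
  fixes w :: complex
  assumes "Im w > 0" "\<forall>r\<in>#R. Im r \<le> 0"
  shows "Im w * ((Re (\<Sum>r\<in>#R. 1/(w-r)))^2 + (Im (\<Sum>r\<in>#R. 1/(w-r)))^2)
          + real (size R) * Im (\<Sum>r\<in>#R. 1/(w-r)) \<le> 0"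
  using assms(2)
proof (induction R)
  case empty then show ?case by simp
next
  case (add x R)
  have IH: "Im w * ((Re (\<Sum>r\<in>#R. 1/(w-r)))^2 + (Im (\<Sum>r\<in>#R. 1/(w-r)))^2)
          + real (size R) * Im (\<Sum>r\<in>#R. 1/(w-r)) \<le> 0" using add by auto
  have "Im x \<le> 0" using add by auto
  from single_ineq[OF assms(1) this] have s: "Im w * ((Re (1/(w-x)))^2 + (Im (1/(w-x)))^2) + Im (1/(w-x)) \<le> 0" .
  from key_ineq_step[OF assms(1) _ IH s] show ?case
    by (simp add: add.commute)
qed

lemma sum_Im_nonpos:
  fixes w :: complex
  assumes "Im w > 0" "\<forall>r\<in>#R. Im r \<le> 0"
  shows "Im (\<Sum>r\<in>#R. 1/(w-r)) \<le> 0"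
  using assms(2)
proof (induction R)
  case empty then show ?case by simp
next
  case (add x R)
  have "Im x \<le> 0" using add by auto
  from single_ineq[OF assms(1) this] have "Im (1/(w-x)) \<le> 0"
    using assms(1) by (smt (verit) mult_nonneg_nonneg zero_le_power2)
  then show ?case using add by auto
qed



lemma inv_parts:
  fixes y :: complex
  assumes "y \<noteq> 0"
  shows "(Re (1/y))^2 + (Im (1/y))^2 = 1 / ((Re y)^2 + (Im y)^2)"
    "Im (1/y) = - Im y / ((Re y)^2 + (Im y)^2)"
proof -
  define D where "D = (Re y)^2 + (Im y)^2"
  have Dp: "D > 0" using assms unfolding D_def
    by (simp add: complex_eq_iff sum_power2_gt_zero_iff)
  have r1: "Re (1/y) = Re y / D" "Im (1/y) = - Im y / D"
    unfolding D_def by (simp_all add: Re_divide Im_divide power2_eq_square)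
  have "(Re y / D)^2 + (- Im y / D)^2 = ((Re y)^2 + (Im y)^2) / D^2"
    by (simp add: power_divide add_divide_distrib)
  also have "\<dots> = 1 / D" using Dp unfolding D_def[symmetric] by (simp add: power2_eq_square)
  finally show "(Re (1/y))^2 + (Im (1/y))^2 = 1 / ((Re y)^2 + (Im y)^2)" unfolding r1 D_def .
  show "Im (1/y) = - Im y / ((Re y)^2 + (Im y)^2)" using r1 D_def by simp
qed

lemma laguerre:
  fixes g :: "complex poly"
  assumes g0: "g \<noteq> 0" and dg: "degree g \<le> n" and n1: "n \<ge> 1"
    and st: "\<forall>w. Im w > 0 \<longrightarrow> poly g w \<noteq> 0" and v: "Im v > 0" and w: "Im w > 0"
  shows "of_nat n * poly g w - (w - v) * poly (pderiv g) w \<noteq> 0"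
proof
  assume eq0: "of_nat n * poly g w - (w - v) * poly (pderiv g) w = 0"
  obtain R where sR: "size R = degree g" and gR: "g = smult (lead_coeff g) (\<Prod>x\<in>#R. [:-x, 1:])"
    using alg_closed_imp_factorization[OF g0] by blast
  define P where "P = (\<Prod>x\<in>#R. [:-x, 1:])"
  define l where "l = lead_coeff g"
  have l0: "l \<noteq> 0" using g0 unfolding l_def by simp
  have gP: "g = smult l P" using gR unfolding P_def l_def .
  have roots: "\<forall>r\<in>#R. Im r \<le> 0"
  proof
    fix r assume "r \<in># R"
    then obtain R' where "R = add_mset r R'" by (meson multi_member_split)
    then have "P = [:-r,1:] * (\<Prod>x\<in>#R'. [:-x, 1:])" unfolding P_def by simp
    then have "poly g r = 0" unfolding gP by simp
    then show "Im r \<le> 0" using st by (meson not_le)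
  qed
  have wR: "\<forall>r\<in>#R. w \<noteq> r" using roots w by auto
  define S where "S = (\<Sum>r\<in>#R. 1/(w - r))"
  have dP: "poly (pderiv P) w = poly P w * S"
    unfolding P_def S_def by (rule pderiv_prod_mset_linear[OF wR])
  have Pw: "poly P w \<noteq> 0" using st w unfolding gP by auto
  have "of_nat n * poly g w - (w - v) * poly (pderiv g) w = l * poly P w * (of_nat n - (w - v) * S)"
    unfolding gP by (simp add: pderiv_smult dP algebra_simps)
  with eq0 l0 Pw have nS: "of_nat n = (w - v) * S" by simp
  show False
  proof (cases "w = v")
    case True then show False using nS n1 by simp
  next
    case False
    define y where "y = w - v"
    have y0: "y \<noteq> 0" using False unfolding y_def by simp
    have SS: "S = of_nat n * (1/y)" using nS y0 unfolding y_def by (simp add: field_simps)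
    have I1: "Im w * ((Re S)^2 + (Im S)^2) + real (size R) * Im S \<le> 0"
      using sum_ineq[OF w roots] unfolding S_def .
    have I2: "Im S \<le> 0" using sum_Im_nonpos[OF w roots] unfolding S_def .
    have "real (size R) * Im S \<ge> real n * Im S" using I2 sR dg by (simp add: mult_right_mono_neg)
    with I1 have I3: "Im w * ((Re S)^2 + (Im S)^2) + real n * Im S \<le> 0" by linarith
    define D where "D = (Re y)^2 + (Im y)^2"
    have Dp: "D > 0" using y0 unfolding D_def
      by (simp add: complex_eq_iff sum_power2_gt_zero_iff)
    have b1: "Re S = real n * Re y / D" "Im S = - real n * Im y / D"
      unfolding SS D_def by (simp_all add: Re_divide Im_divide power2_eq_square)
    have "(Re S)^2 + (Im S)^2 = (real n)^2 * ((Re y)^2 + (Im y)^2) / D^2"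
      unfolding b1 by (simp add: power_divide power_mult_distrib add_divide_distrib distrib_left)
    also have "\<dots> = (real n)^2 / D" using Dp unfolding D_def[symmetric] by (simp add: power2_eq_square)
    finally have a1: "(Re S)^2 + (Im S)^2 = (real n)^2 / D" .
    have a2: "Im S = - real n * Im y / D" using b1 by simp
    have "Im w * ((Re S)^2 + (Im S)^2) + real n * Im S = (real n)^2 * (Im w - Im y) / D"
      unfolding a1 using Dp by (simp add: a2 field_simps power2_eq_square)
    also have "Im w - Im y = Im v" unfolding y_def by simp
    finally have "Im w * ((Re S)^2 + (Im S)^2) + real n * Im S = (real n)^2 * Im v / D" .
    moreover have "(real n)^2 * Im v / D > 0" using n1 v Dp by simp
    ultimately show False using I3 by linarith
  qed
qed



lemma coeff_lin_mult: "coeff ([:a,1:] * (q::complex poly)) j = a * coeff q j + (if j = 0 then 0 else coeff q (j - 1))"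
  by (cases j) (simp_all add: coeff_pCons)

lemma coeff_lin_pderiv: "coeff ([:a,1:] * pderiv (q::complex poly)) j = a * of_nat (Suc j) * coeff q (Suc j) + of_nat j * coeff q j"
  by (cases j) (simp_all add: coeff_lin_mult coeff_pderiv)

lemma degree_gp: "degree (gp n c) \<le> n"
  by (rule degree_le) (simp add: coeff_gp)

lemma gp_step:
  fixes t :: "nat \<Rightarrow> complex" and a :: complex and n :: nat
  defines "G \<equiv> gp (Suc n) (\<lambda>k. of_nat (Suc n choose k) * t k)"
  shows "gp n (\<lambda>k. of_nat (n choose k) * (t (Suc k) - a * t k)) =
         smult (1 / of_nat (Suc n)) (smult (of_nat (Suc n)) G - [:a,1:] * pderiv G)"
proof (rule poly_eqI)
  fix j
  define N where "N = Suc n"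
  have cG: "coeff G i = (if i \<le> N then of_nat (N choose (N - i)) * t (N - i) else 0)" for i
    unfolding G_def N_def by (simp add: coeff_gp)
  have R: "coeff (smult (1 / of_nat (Suc n)) (smult (of_nat (Suc n)) G - [:a,1:] * pderiv G)) j
     = (1 / of_nat N) * (of_nat (N - j) * coeff G j - a * of_nat (Suc j) * coeff G (Suc j))"
  proof -
    have "coeff (smult (1 / of_nat (Suc n)) (smult (of_nat (Suc n)) G - [:a,1:] * pderiv G)) j
      = (1 / of_nat N) * (of_nat N * coeff G j - (a * of_nat (Suc j) * coeff G (Suc j) + of_nat j * coeff G j))"
      unfolding N_def by (simp only: coeff_smult coeff_diff coeff_lin_pderiv)
    also have "\<dots> = (1 / of_nat N) * ((of_nat N - of_nat j) * coeff G j - a * of_nat (Suc j) * coeff G (Suc j))"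
      by (simp add: algebra_simps)
    also have "\<dots> = (1 / of_nat N) * (of_nat (N - j) * coeff G j - a * of_nat (Suc j) * coeff G (Suc j))"
    proof (cases "j \<le> N")
      case True then show ?thesis by (simp add: of_nat_diff)
    next
      case False then show ?thesis by (simp add: cG)
    qed
    finally show ?thesis .
  qed
  have L: "coeff (gp n (\<lambda>k. of_nat (n choose k) * (t (Suc k) - a * t k))) j =
     (1 / of_nat N) * (of_nat (N - j) * coeff G j - a * of_nat (Suc j) * coeff G (Suc j))"
  proof (cases "j \<le> n")
    case True
    define k where "k = n - j"
    have e1: "N - j = Suc k" "N - Suc j = k" "Suc j \<le> N" "j \<le> N" using True unfolding k_def N_def by auto
    have b1: "of_nat (Suc k) * (of_nat (N choose Suc k) :: complex) = of_nat N * of_nat (n choose k)"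
      unfolding N_def using Suc_times_binomial_eq[of n k] by (metis of_nat_mult mult.commute)
    have b2: "of_nat (N - k) * (of_nat (N choose k) :: complex) = of_nat N * of_nat (n choose k)"
      unfolding N_def using binomial_absorb_comp[of "Suc n" k] by (metis of_nat_mult diff_Suc_1)
    have sj: "Suc j = N - k" using True unfolding k_def N_def by simp
    have c1: "of_nat (N - j) * coeff G j = of_nat (Suc k) * of_nat (N choose Suc k) * t (Suc k)"
      unfolding cG using e1 by simp
    have c2: "of_nat (Suc j) * coeff G (Suc j) = of_nat (N - k) * of_nat (N choose k) * t k"
      unfolding cG using e1 sj by simp
    have "(1 / of_nat N) * (of_nat (N - j) * coeff G j - a * of_nat (Suc j) * coeff G (Suc j))
      = (1 / of_nat N) * (of_nat (Suc k) * of_nat (N choose Suc k) * t (Suc k) - a * (of_nat (N - k) * of_nat (N choose k)) * t k)"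
      using c1 c2 by (simp add: mult.assoc)
    also have "\<dots> = (1 / of_nat N) * (of_nat N * of_nat (n choose k) * t (Suc k) - a * (of_nat N * of_nat (n choose k)) * t k)"
      by (simp only: b1 b2)
    also have "\<dots> = (1 / of_nat N) * of_nat N * (of_nat (n choose k) * (t (Suc k) - a * t k))"
      by (simp add: algebra_simps)
    also have "\<dots> = of_nat (n choose k) * (t (Suc k) - a * t k)"
      unfolding N_def by (simp del: of_nat_Suc)
    finally show ?thesis using True unfolding k_def by (simp add: coeff_gp)
  next
    case False
    then show ?thesis by (cases "j = N") (auto simp: coeff_gp cG N_def)
  qed
  show "coeff (gp n (\<lambda>k. of_nat (n choose k) * (t (Suc k) - a * t k))) j =
        coeff (smult (1 / of_nat (Suc n)) (smult (of_nat (Suc n)) G - [:a,1:] * pderiv G)) j"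
    using L R by simp
qed



lemma degree_prod_lin: "degree (\<Prod>a\<in>#A. [:-a,1:] :: complex poly) \<le> size A"
proof (induction A)
  case empty then show ?case by simp
next
  case (add x A)
  have "degree ([:-x,1:] * (\<Prod>a\<in>#A. [:-a,1:])) \<le> degree [:-x,1::complex:] + degree (\<Prod>a\<in>#A. [:-a,1:] :: complex poly)"
    by (rule degree_mult_le)
  then show ?case using add by simp
qed

lemma sum_shift_lin:
  fixes P :: "complex poly" and t :: "nat \<Rightarrow> complex"
  assumes "degree P \<le> n"
  shows "(\<Sum>k\<le>Suc n. coeff ([:-a,1:] * P) k * t k) = (\<Sum>k\<le>n. coeff P k * (t (Suc k) - a * t k))"
proof -
  have c: "coeff ([:-a,1:] * P) k = - a * coeff P k + (if k = 0 then 0 else coeff P (k - 1))" for k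
    using coeff_lin_mult[of "-a" P k] by simp
  have "(\<Sum>k\<le>Suc n. coeff ([:-a,1:] * P) k * t k)
     = (\<Sum>k\<le>Suc n. - a * coeff P k * t k) + (\<Sum>k\<le>Suc n. (if k = 0 then 0 else coeff P (k - 1)) * t k)"
    unfolding c by (simp add: sum.distrib[symmetric] algebra_simps)
  also have "(\<Sum>k\<le>Suc n. - a * coeff P k * t k) = (\<Sum>k\<le>n. - a * coeff P k * t k)"
    using assms by (simp add: coeff_eq_0)
  also have "(\<Sum>k\<le>Suc n. (if k = 0 then 0 else coeff P (k - 1)) * t k) = (\<Sum>k\<le>n. coeff P k * t (Suc k))"
    by (subst sum.atMost_Suc_shift) simp
  finally show ?thesis by (simp add: sum.distrib[symmetric] algebra_simps)
qed

lemma grace: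
  fixes t :: "nat \<Rightarrow> complex"
  assumes "size A = n" "\<forall>a\<in>#A. Im a < 0"
    "\<forall>w. Im w > 0 \<longrightarrow> poly (gp n (\<lambda>k. of_nat (n choose k) * t k)) w \<noteq> 0"
  shows "(\<Sum>k\<le>n. coeff (\<Prod>a\<in>#A. [:-a,1:]) k * t k) \<noteq> 0"
  using assms
proof (induction n arbitrary: A t)
  case 0
  then have "A = {#}" by simp
  moreover have "poly (gp 0 (\<lambda>k. of_nat (0 choose k) * t k)) \<i> \<noteq> 0" using 0 by simp
  ultimately show ?case by (simp add: gp_def poly_monom)
next
  case (Suc n)
  obtain a A' where AA: "A = add_mset a A'" using Suc.prems(1) by (metis size_eq_Suc_imp_eq_union)
  have sA': "size A' = n" using Suc.prems(1) AA by simp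
  have ia: "Im a < 0" using Suc.prems(2) AA by simp
  have iA': "\<forall>a\<in>#A'. Im a < 0" using Suc.prems(2) AA by simp
  define P where "P = (\<Prod>a\<in>#A'. [:-a,1:] :: complex poly)"
  have dP: "degree P \<le> n" using degree_prod_lin[of A'] sA' unfolding P_def by simp
  define G where "G = gp (Suc n) (\<lambda>k. of_nat (Suc n choose k) * t k)"
  have Gnz: "\<forall>w. Im w > 0 \<longrightarrow> poly G w \<noteq> 0" using Suc.prems(3) unfolding G_def by simp
  have G0: "G \<noteq> 0" using Gnz by (metis complex_i_not_zero imaginary_unit.sel(2) poly_0 zero_less_one)
  have dG: "degree G \<le> Suc n" unfolding G_def by (rule degree_gp)
  have nz': "\<forall>w. Im w > 0 \<longrightarrow> poly (gp n (\<lambda>k. of_nat (n choose k) * (t (Suc k) - a * t k))) w \<noteq> 0"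
  proof (intro allI impI)
    fix w :: complex assume w: "Im w > 0"
    have v: "Im (-a) > 0" using ia by simp
    have "of_nat (Suc n) * poly G w - (w - (-a)) * poly (pderiv G) w \<noteq> 0"
      by (rule laguerre[OF G0 dG _ Gnz v w]) simp
    moreover have "poly (smult (1 / of_nat (Suc n)) (smult (of_nat (Suc n)) G - [:a,1:] * pderiv G)) w
       = (1 / of_nat (Suc n)) * (of_nat (Suc n) * poly G w - (w - (-a)) * poly (pderiv G) w)"
    proof -
      have e: "poly [:a,1:] w = w - (-a)" by simp
      show ?thesis by (simp only: poly_smult poly_diff poly_mult e)
    qed
    moreover have N0: "(1 / of_nat (Suc n) :: complex) \<noteq> 0" by (simp only: divide_eq_0_iff of_nat_eq_0_iff) simp
    ultimately have "poly (smult (1 / of_nat (Suc n)) (smult (of_nat (Suc n)) G - [:a,1:] * pderiv G)) w \<noteq> 0"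
      by (metis mult_eq_0_iff)
    then show "poly (gp n (\<lambda>k. of_nat (n choose k) * (t (Suc k) - a * t k))) w \<noteq> 0"
      unfolding gp_step[of n t a] G_def[symmetric] .
  qed
  have IH: "(\<Sum>k\<le>n. coeff P k * (t (Suc k) - a * t k)) \<noteq> 0"
    using Suc.IH[OF sA' iA' nz'] unfolding P_def .
  show ?case unfolding AA using IH sum_shift_lin[OF dP, of a t] unfolding P_def by simp
qed



lemma deg_lin_power: "degree ([:w,1:]^n :: complex poly) \<le> n"
  using degree_power_le[of "[:w,1:]" n] by simp

lemma stable_lin_power: assumes "Im w > 0" shows "stable1 ([:w,1:]^n)"
proof -
  have "poly ([:w,1:]^n) z \<noteq> 0" if "Im z > 0" for z
  proof -
    have "w + z \<noteq> 0" using assms that by (metis add_pos_pos complex_eq_iff plus_complex.sel(2) zero_complex.sel(2) less_irrefl)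
    then show ?thesis by simp
  qed
  moreover have "([:w,1:]^n :: complex poly) \<noteq> 0" by simp
  ultimately show ?thesis unfolding stable1_def by blast
qed

lemma eval_symbol_T: assumes "linear_op_Cn n T"
  shows "poly (T ([:w,1:]^n)) z = eval2 (symbol n T) z w"
  unfolding eval2_symbol poly_T_expand[OF assms deg_lin_power]
  by (intro sum.cong refl) (simp add: coeff_linear_poly_power)

lemma stable1_smult: assumes "stable1 (smult c p)" shows "stable1 p"
  using assms unfolding stable1_def by auto

lemma stable1_smultI: assumes "stable1 p" "c \<noteq> 0" shows "stable1 (smult c p)"
  using assms unfolding stable1_def by auto

lemma poly_bound:
  fixes h :: "complex poly"
  assumes "degree h \<le> n"
  shows "norm (poly h z) \<le> (\<Sum>k\<le>n. norm (coeff h k)) * (1 + norm z)^n"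
proof -
  have "poly h z = (\<Sum>k\<le>n. coeff h k * z^k)"
    by (subst poly_as_monoms[OF assms]) (simp add: poly_sum poly_monom)
  then have "norm (poly h z) \<le> (\<Sum>k\<le>n. norm (coeff h k) * norm z ^ k)"
    by (metis (no_types, lifting) norm_mult norm_power norm_sum sum.cong)
  also have "\<dots> \<le> (\<Sum>k\<le>n. norm (coeff h k) * (1 + norm z)^n)"
  proof (intro sum_mono mult_left_mono)
    fix k assume "k \<in> {..n}"
    have "norm z ^ k \<le> (1 + norm z) ^ k" by (intro power_mono) auto
    also have "\<dots> \<le> (1 + norm z) ^ n" using \<open>k \<in> {..n}\<close> by (intro power_increasing) auto
    finally show "norm z ^ k \<le> (1 + norm z) ^ n" .
  qed auto
  also have "\<dots> = (\<Sum>k\<le>n. norm (coeff h k)) * (1 + norm z)^n" by (simp add: sum_distrib_right)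
  finally show ?thesis .
qed

lemma perturb:
  fixes h :: "complex poly"
  assumes w0: "Im w0 > 0" and dh: "degree h \<le> n"
  shows "\<exists>e::real. e > 0 \<and> stable1 ([:w0,1:]^n + smult (of_real e) h)"
proof -
  define \<delta> where "\<delta> = Im w0"
  define M where "M = (\<Sum>k\<le>n. norm (coeff h k))"
  define K where "K = 1 + (1 + norm w0) / \<delta>"
  have dp: "\<delta> > 0" using w0 unfolding \<delta>_def .
  have M0: "M \<ge> 0" unfolding M_def by (simp add: sum_nonneg)
  have K0: "K \<ge> 0" unfolding K_def using dp by (simp add: add_nonneg_nonneg)
  define e where "e = 1 / (M * K^n + 1)"
  have MK: "M * K^n \<ge> 0" using M0 K0 by simp
  have e0: "e > 0" unfolding e_def using MK by simp
  have key: "poly ([:w0,1:]^n) z + of_real e * poly h z \<noteq> 0" if z: "Im z > 0" for z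
  proof
    assume eq: "poly ([:w0,1:]^n) z + of_real e * poly h z = 0"
    define y where "y = w0 + z"
    have Qz: "poly ([:w0,1:]^n) z = y^n" unfolding y_def by simp
    have yd: "norm y \<ge> \<delta>"
    proof -
      have "Im y \<le> norm y" by (rule order.trans[OF abs_ge_self abs_Im_le_cmod])
      moreover have "Im y \<ge> \<delta>" unfolding y_def \<delta>_def using z by simp
      ultimately show ?thesis by linarith
    qed
    have yp: "norm y > 0" using yd dp by linarith
    have "1 + norm z \<le> K * norm y"
    proof -
      have "norm z \<le> norm y + norm w0" unfolding y_def
        by (metis add_diff_cancel_left' norm_triangle_ineq4 add.commute)
      moreover have "1 + norm w0 \<le> (1 + norm w0) / \<delta> * norm y"
      proof -
        have "(1 + norm w0) * 1 \<le> (1 + norm w0) * (norm y / \<delta>)"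
          using yd dp by (intro mult_left_mono) auto
        then show ?thesis by simp
      qed
      ultimately show ?thesis unfolding K_def by (simp add: distrib_right)
    qed
    then have "(1 + norm z)^n \<le> (K * norm y)^n" by (intro power_mono) auto
    then have hb: "norm (poly h z) \<le> M * K^n * norm y^n"
      using poly_bound[OF dh, of z] M0 unfolding M_def[symmetric]
      by (metis (no_types, opaque_lifting) mult.assoc mult_left_mono order_trans power_mult_distrib)
    have "norm y ^ n = norm (of_real e * poly h z)" using eq Qz
      by (metis add_eq_0_iff norm_minus_cancel norm_power)
    also have "\<dots> = e * norm (poly h z)" using e0 by (simp add: norm_mult)
    also have "\<dots> \<le> e * (M * K^n * norm y^n)" using hb e0 by (intro mult_left_mono) auto
    also have "\<dots> < norm y ^ n"
    proof -
      have "e * (M * K^n) < 1" unfolding e_def using MK by (simp add: field_simps)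
      then have "e * (M * K^n) * norm y^n < 1 * norm y^n" using yp by (intro mult_strict_right_mono) auto
      then show ?thesis by (simp add: mult.assoc)
    qed
    finally show False by simp
  qed
  have "stable1 ([:w0,1:]^n + smult (of_real e) h)"
    unfolding stable1_def
  proof
    have "poly ([:w0,1:]^n + smult (of_real e) h) \<i> \<noteq> 0" using key[of \<i>] by simp
    then show "[:w0,1:]^n + smult (of_real e) h \<noteq> 0" by (metis poly_0)
    show "\<forall>z. 0 < Im z \<longrightarrow> poly ([:w0,1:]^n + smult (of_real e) h) z \<noteq> 0" using key by simp
  qed
  then show ?thesis using e0 by blast
qed

lemma converse_dir:
  assumes lin: "linear_op_Cn n T" and ps: "preserves_stability n T"
  shows "(\<exists>\<alpha> P. linear_fun_Cn n \<alpha> \<and> stable1 P \<and> (\<forall>f. degree f \<le> n \<longrightarrow> T f = smult (\<alpha> f) P))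
     \<or> stable2 (symbol n T)"
proof (cases "\<forall>w. Im w > 0 \<longrightarrow> T ([:w,1:]^n) \<noteq> 0")
  case True
  have "eval2 (symbol n T) z w \<noteq> 0" if "Im z > 0" "Im w > 0" for z w
  proof -
    have "stable1 (T ([:w,1:]^n))"
      using ps True that stable_lin_power[of w n] deg_lin_power[of w n] unfolding preserves_stability_def by blast
    then show ?thesis using that unfolding eval_symbol_T[OF lin, symmetric] stable1_def by blast
  qed
  moreover have "symbol n T \<noteq> 0"
  proof
    assume "symbol n T = 0"
    then have "eval2 (symbol n T) \<i> \<i> = 0" by (simp add: eval2_def)
    with calculation show False by simp
  qed
  ultimately show ?thesis unfolding stable2_def by blast
next
  case False
  then obtain w0 where w0: "Im w0 > 0" and T0: "T ([:w0,1:]^n) = 0" by blast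
  have allst: "stable1 (T h) \<or> T h = 0" if dh: "degree h \<le> n" for h
  proof -
    obtain e where e0: "e > 0" and st: "stable1 ([:w0,1:]^n + smult (of_real e) h)"
      using perturb[OF w0 dh] by blast
    have deg: "degree ([:w0,1:]^n + smult (of_real e) h) \<le> n"
      using deg_lin_power[of w0 n] dh by (intro degree_add_le) (auto intro: order.trans[OF degree_smult_le])
    have "T ([:w0,1:]^n + smult (of_real e) h) = smult 1 (T ([:w0,1:]^n)) + smult (of_real e) (T h)"
      using lin deg_lin_power[of w0 n] dh unfolding linear_op_Cn_def by (metis smult_1_left)
    also have "\<dots> = smult (of_real e) (T h)" using T0 by simp
    finally have "stable1 (smult (of_real e) (T h)) \<or> smult (of_real e) (T h) = 0"
      using ps st deg unfolding preserves_stability_def by metis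
    then show ?thesis using e0 stable1_smult by auto
  qed
  show ?thesis
  proof (cases "\<forall>h. degree h \<le> n \<longrightarrow> T h = 0")
    case True
    have "linear_fun_Cn n (\<lambda>_. 0)" unfolding linear_fun_Cn_def by simp
    moreover have "stable1 1" unfolding stable1_def by simp
    ultimately show ?thesis using True by fastforce
  next
    case False
    then obtain h0 where dh0: "degree h0 \<le> n" and Th0: "T h0 \<noteq> 0" by blast
    define P where "P = T h0"
    have sP: "stable1 P" using allst[OF dh0] Th0 unfolding P_def by blast
    have Pi: "poly P \<i> \<noteq> 0" using sP unfolding stable1_def by simp
    define \<alpha> where "\<alpha> h = poly (T h) \<i> / poly P \<i>" for h
    have la: "linear_fun_Cn n \<alpha>"
      unfolding linear_fun_Cn_def
    proof (intro allI impI)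
      fix f g :: "complex poly" and a b :: complex assume "degree f \<le> n" "degree g \<le> n"
      then have "T (smult a f + smult b g) = smult a (T f) + smult b (T g)"
        using lin unfolding linear_op_Cn_def by blast
      then show "\<alpha> (smult a f + smult b g) = a * \<alpha> f + b * \<alpha> g"
        unfolding \<alpha>_def by (simp add: add_divide_distrib)
    qed
    have rep: "T h = smult (\<alpha> h) P" if dh: "degree h \<le> n" for h
    proof -
      define d where "d = smult 1 h + smult (- \<alpha> h) h0"
      have dd: "degree d \<le> n" unfolding d_def using dh dh0
        by (intro degree_add_le) (auto intro: order.trans[OF degree_smult_le])
      have Td: "T d = smult 1 (T h) + smult (- \<alpha> h) P"
        unfolding d_def P_def using lin dh dh0 unfolding linear_op_Cn_def by blast
      have "poly (T d) \<i> = 0" unfolding Td \<alpha>_def using Pi by simp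
      then have "T d = 0" using allst[OF dd] unfolding stable1_def by auto
      then show ?thesis unfolding Td by (simp add: algebra_simps)
    qed
    show ?thesis using la sP rep by blast
  qed
qed



definition pconv :: "(nat \<Rightarrow> complex poly) \<Rightarrow> complex poly \<Rightarrow> bool" where
  "pconv p p0 \<longleftrightarrow> (\<forall>k. (\<lambda>m. coeff (p m) k) \<longlonglongrightarrow> coeff p0 k)"

lemma pconv_mult: assumes "pconv p p0" "pconv q q0" shows "pconv (\<lambda>m. p m * q m) (p0 * q0)"
  using assms unfolding pconv_def coeff_mult by (intro allI tendsto_sum tendsto_mult) auto

lemma pconv_const: "pconv (\<lambda>m. p) p"
  unfolding pconv_def by simp

lemma pconv_smult: assumes "pconv p p0" shows "pconv (\<lambda>m. smult c (p m)) (smult c p0)"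
  using assms unfolding pconv_def by (auto intro: tendsto_mult)

lemma pconv_power: assumes "pconv p p0" shows "pconv (\<lambda>m. p m ^ j) (p0 ^ j)"
proof (induction j)
  case 0 then show ?case by (simp add: pconv_const)
next
  case (Suc j) then show ?case using pconv_mult[OF assms Suc] by simp
qed

lemma pconv_lin: assumes "a \<longlonglongrightarrow> a0" "b \<longlonglongrightarrow> b0" shows "pconv (\<lambda>m. [:a m, b m:]) [:a0, b0:]"
  unfolding pconv_def
proof
  fix k show "(\<lambda>m. coeff [:a m, b m:] k) \<longlonglongrightarrow> coeff [:a0, b0:] k"
  proof (cases k)
    case 0 then show ?thesis using assms by simp
  next
    case (Suc j) then show ?thesis using assms by (cases j) simp_all
  qed
qed

lemma pconv_prod_mset: assumes "\<And>x. x \<in># R \<Longrightarrow> pconv (\<lambda>m. p m x) (p0 x)"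
  shows "pconv (\<lambda>m. \<Prod>x\<in>#R. p m x) (\<Prod>x\<in>#R. p0 x)"
  using assms
proof (induction R)
  case empty then show ?case by (simp add: pconv_const)
next
  case (add x R)
  have "pconv (\<lambda>m. p m x * (\<Prod>x\<in>#R. p m x)) (p0 x * (\<Prod>x\<in>#R. p0 x))"
    using add by (intro pconv_mult) auto
  then show ?case by simp
qed

lemma uniform_limit_constfun:
  assumes "c \<longlonglongrightarrow> c0"
  shows "uniform_limit K (\<lambda>m z. c m) (\<lambda>z. c0) sequentially"
proof (rule uniform_limitI)
  fix e :: real assume "e > 0"
  then have "eventually (\<lambda>m. dist (c m) c0 < e) sequentially" using assms by (simp add: tendsto_iff)
  then show "eventually (\<lambda>m. \<forall>z\<in>K. dist (c m) c0 < e) sequentially" by simp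
qed

lemma uniform_limit_lincomb:
  fixes u :: "nat \<Rightarrow> complex \<Rightarrow> complex"
  assumes fin: "finite A" and cK: "compact K" and cont: "\<And>k. continuous_on K (u k)"
    and conv: "\<And>k. (\<lambda>m. c m k) \<longlonglongrightarrow> c0 k"
  shows "uniform_limit K (\<lambda>m z. \<Sum>k\<in>A. c m k * u k z) (\<lambda>z. \<Sum>k\<in>A. c0 k * u k z) sequentially"
  using fin
proof (induction A rule: finite_induct)
  case empty then show ?case by (simp add: uniform_limit_const)
next
  case (insert x F)
  have bu: "bounded (u x ` K)" by (rule compact_imp_bounded[OF compact_continuous_image[OF cont cK]])
  have "uniform_limit K (\<lambda>m z. c m x * u x z) (\<lambda>z. c0 x * u x z) sequentially"
    by (rule uniform_lim_mult[OF uniform_limit_constfun[OF conv] uniform_limit_const _ bu])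
       (rule bounded_subset[OF finite_imp_bounded[of "{c0 x}"]], auto)
  then have "uniform_limit K (\<lambda>m z. c m x * u x z + (\<Sum>k\<in>F. c m k * u k z)) (\<lambda>z. c0 x * u x z + (\<Sum>k\<in>F. c0 k * u k z)) sequentially"
    using insert by (intro uniform_limit_add) auto
  then show ?case using insert by simp
qed

lemma infinite_UHP: "infinite {z::complex. Im z > 0}"
proof -
  have inj: "inj (\<lambda>k::nat. \<i> * of_nat (Suc k))" by (auto simp: inj_def)
  have "range (\<lambda>k::nat. \<i> * of_nat (Suc k)) \<subseteq> {z::complex. Im z > 0}" by auto
  then show ?thesis using range_inj_infinite[OF inj] finite_subset by blast
qed

lemma hurwitz_poly:
  fixes F :: "nat \<Rightarrow> complex \<Rightarrow> complex" and p :: "complex poly"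
  assumes nz: "\<And>m z. Im z > 0 \<Longrightarrow> F m z \<noteq> 0"
    and hol: "\<And>m. F m holomorphic_on {z. Im z > 0}"
    and ul: "\<And>K. compact K \<Longrightarrow> K \<subseteq> {z. Im z > 0} \<Longrightarrow> uniform_limit K F (poly p) sequentially"
  shows "stable1 p \<or> p = 0"
proof (cases "p = 0")
  case True then show ?thesis by simp
next
  case p0: False
  show ?thesis
  proof (cases "poly p constant_on {z. Im z > 0}")
    case True
    then obtain c where c: "\<And>z. Im z > 0 \<Longrightarrow> poly p z = c" unfolding constant_on_def by auto
    show ?thesis
    proof (cases "c = 0")
      case True
      then have "{z. Im z > 0} \<subseteq> {z. poly p z = 0}" using c by auto
      then have "finite {z::complex. Im z > 0}" using poly_roots_finite[OF p0] finite_subset by blast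
      then show ?thesis using infinite_UHP by blast
    next
      case False then show ?thesis using c p0 unfolding stable1_def by auto
    qed
  next
    case False
    have "poly p z0 \<noteq> 0" if "Im z0 > 0" for z0
    proof (rule Hurwitz_no_zeros[of "{z. Im z > 0}" F "poly p"])
      show "open {z. Im z > 0}" by (rule open_halfspace_Im_gt)
      show "connected {z. Im z > 0}" by (rule convex_connected[OF convex_halfspace_Im_gt])
      show "poly p holomorphic_on {z. Im z > 0}" by (intro holomorphic_intros)
    qed (use nz hol ul False that in auto)
    then show ?thesis using p0 unfolding stable1_def by auto
  qed
qed



lemma forward_dir:
  assumes lin: "linear_op_Cn n T" and st2: "stable2 (symbol n T)"
    and sf: "stable1 f" and df: "degree f \<le> n"
  shows "stable1 (T f) \<or> T f = 0"
proof -
  define t where "t k z = poly (T (monom 1 k)) z" for k z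
  have GL: "(\<Sum>k\<le>n. coeff (\<Prod>b\<in>#B. [:-b,1:]) k * t k z) \<noteq> 0"
    if "size B = n" "\<forall>b\<in>#B. Im b < 0" "Im z > 0" for B z
  proof (rule grace[OF that(1,2)])
    show "\<forall>w. Im w > 0 \<longrightarrow> poly (gp n (\<lambda>k. of_nat (n choose k) * t k z)) w \<noteq> 0"
    proof (intro allI impI)
      fix w :: complex assume w: "Im w > 0"
      have "poly (gp n (\<lambda>k. of_nat (n choose k) * t k z)) w = eval2 (symbol n T) z w"
        unfolding poly_gp eval2_symbol t_def by simp
      then show "poly (gp n (\<lambda>k. of_nat (n choose k) * t k z)) w \<noteq> 0"
        using st2 w that(3) unfolding stable2_def by simp
    qed
  qed
  have f0: "f \<noteq> 0" using sf unfolding stable1_def by simp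
  obtain R where sR: "size R = degree f" and fR: "f = smult (lead_coeff f) (\<Prod>x\<in>#R. [:-x, 1:])"
    using alg_closed_imp_factorization[OF f0] by blast
  define l where "l = lead_coeff f"
  have l0: "l \<noteq> 0" using f0 unfolding l_def by simp
  have roots: "\<forall>r\<in>#R. Im r \<le> 0"
  proof
    fix r assume "r \<in># R"
    then obtain R' where "R = add_mset r R'" by (meson multi_member_split)
    then have "poly f r = 0" by (subst fR) simp
    then show "Im r \<le> 0" using sf unfolding stable1_def by (meson not_le)
  qed
  define d where "d = degree f"
  define ce where "ce m = complex_of_real (inverse (real (Suc m)))" for m
  have ce0: "ce \<longlonglongrightarrow> 0"
    using tendsto_of_real[OF LIMSEQ_inverse_real_of_nat] unfolding ce_def of_real_0 .
  have cenz: "ce m \<noteq> 0" for m unfolding ce_def of_real_eq_0_iff inverse_nonzero_iff_nonzero by simp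
  define fm where "fm m = smult l (\<Prod>x\<in>#R. [:-(x - \<i> * ce m), 1:]) * [:1 + \<i> * ce m, ce m:]^(n-d)" for m
  have pc: "pconv fm f"
  proof -
    have "pconv fm (smult l (\<Prod>x\<in>#R. [:-(x - \<i> * 0), 1:]) * [:1 + \<i> * 0, 0:]^(n-d))"
      unfolding fm_def
      by (intro pconv_mult pconv_smult pconv_prod_mset pconv_power pconv_lin tendsto_intros ce0)
    then show ?thesis using fR unfolding l_def by (simp add: one_pCons[symmetric])
  qed
  define B where "B m = image_mset (\<lambda>x. x - \<i> * ce m) R + replicate_mset (n - d) (-(1 / ce m) - \<i>)" for m
  have fmB: "fm m = smult (l * ce m ^ (n - d)) (\<Prod>b\<in>#B m. [:-b,1:])" for m
  proof -
    have lin1: "[:1 + \<i> * ce m, ce m:] = smult (ce m) [:-(-(1 / ce m) - \<i>), 1:]"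
      using cenz[of m] by (simp add: field_simps)
    have p1: "[:1 + \<i> * ce m, ce m:]^(n-d) = smult (ce m ^ (n-d)) ([:-(-(1 / ce m) - \<i>), 1:]^(n-d))"
      unfolding lin1 smult_power ..
    have p2: "(\<Prod>b\<in>#B m. [:-b,1:]) = (\<Prod>x\<in>#R. [:-(x - \<i> * ce m), 1:]) * [:-(-(1 / ce m) - \<i>), 1:]^(n-d)"
      unfolding B_def by (simp add: image_mset.compositionality o_def)
    show ?thesis unfolding fm_def p1 p2 by (simp only: mult_smult_left mult_smult_right smult_smult mult.commute)
  qed
  have sB: "size (B m) = n" for m unfolding B_def d_def using sR df by simp
  have iB: "\<forall>b\<in>#B m. Im b < 0" for m
  proof -
    have "Im (x - \<i> * ce m) < 0" if "x \<in># R" for x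
    proof -
      have "Im (\<i> * ce m) = inverse (real (Suc m))" unfolding ce_def by (simp only: Im_i_times Re_complex_of_real)
      moreover have "inverse (real (Suc m)) > 0" by simp
      moreover have "Im x \<le> 0" using roots that by blast
      moreover have "Im (x - \<i> * ce m) = Im x - Im (\<i> * ce m)" by (simp only: minus_complex.sel)
      ultimately show ?thesis by linarith
    qed
    moreover have "Im (-(1 / ce m) - \<i>) < 0" unfolding ce_def by simp
    ultimately show ?thesis unfolding B_def by auto
  qed
  define F where "F m z = (\<Sum>k\<le>n. coeff (fm m) k * t k z)" for m z
  have Fnz: "F m z \<noteq> 0" if "Im z > 0" for m z
  proof -
    have "F m z = (l * ce m ^ (n - d)) * (\<Sum>k\<le>n. coeff (\<Prod>b\<in>#B m. [:-b,1:]) k * t k z)"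
      unfolding F_def fmB by (simp add: sum_distrib_left mult.assoc)
    then show ?thesis using GL[OF sB iB that] l0 cenz by simp
  qed
  have Fhol: "F m holomorphic_on {z. Im z > 0}" for m
    unfolding F_def t_def by (intro holomorphic_intros)
  have TfF: "poly (T f) = (\<lambda>z. \<Sum>k\<le>n. coeff f k * t k z)"
    unfolding t_def using poly_T_expand[OF lin df] by auto
  have ul: "uniform_limit K F (poly (T f)) sequentially" if "compact K" for K
    unfolding TfF F_def
  proof (rule uniform_limit_lincomb[OF _ that])
    show "continuous_on K (t k)" for k unfolding t_def by (intro continuous_intros)
    show "(\<lambda>m. coeff (fm m) k) \<longlonglongrightarrow> coeff f k" for k using pc unfolding pconv_def by blast
  qed simp
  show ?thesis by (rule hurwitz_poly[OF Fnz Fhol ul])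
qed


theorem mainTheorem3:
  fixes n :: nat and T :: "complex poly \<Rightarrow> complex poly"
  assumes "linear_op_Cn n T"
  shows "preserves_stability n T \<longleftrightarrow>
    ((\<exists>\<alpha> P. linear_fun_Cn n \<alpha> \<and> stable1 P \<and> (\<forall>f. degree f \<le> n \<longrightarrow> T f = smult (\<alpha> f) P))
     \<or> stable2 (symbol n T))"
proof
  assume "preserves_stability n T"
  then show "(\<exists>\<alpha> P. linear_fun_Cn n \<alpha> \<and> stable1 P \<and> (\<forall>f. degree f \<le> n \<longrightarrow> T f = smult (\<alpha> f) P))
     \<or> stable2 (symbol n T)" by (rule converse_dir[OF assms])
next
  assume h: "(\<exists>\<alpha> P. linear_fun_Cn n \<alpha> \<and> stable1 P \<and> (\<forall>f. degree f \<le> n \<longrightarrow> T f = smult (\<alpha> f) P))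
     \<or> stable2 (symbol n T)"
  show "preserves_stability n T"
    unfolding preserves_stability_def
  proof (intro allI impI)
    fix f assume sf: "stable1 f \<and> degree f \<le> n"
    from h show "stable1 (T f) \<or> T f = 0"
    proof
      assume "\<exists>\<alpha> P. linear_fun_Cn n \<alpha> \<and> stable1 P \<and> (\<forall>f. degree f \<le> n \<longrightarrow> T f = smult (\<alpha> f) P)"
      then obtain \<alpha> P where sP: "stable1 P" and rep: "\<forall>f. degree f \<le> n \<longrightarrow> T f = smult (\<alpha> f) P" by blast
      have Tf: "T f = smult (\<alpha> f) P" using rep sf by blast
      show ?thesis
      proof (cases "\<alpha> f = 0")
        case True then show ?thesis using Tf by simp
      next
        case False then show ?thesis using Tf stable1_smultI[OF sP] by simp
      qed
    next
      assume "stable2 (symbol n T)"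
      then show ?thesis using forward_dir[OF assms] sf by blast
    qed
  qed
qed

end
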